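(* Let $(X,\perp,Y,T)$ be an implicative frame. Then the operation $\blacktriangleright:\mathcal{G}(X)\times\mathcal{G}(Y)\to\mathcal{G}(Y)$ distributes over arbitrary joins of Galois sets in each argument place: for any families $A_i\in\mathcal{G}(X)$ ($i\in I$) and $B_j\in\mathcal{G}(Y)$ ($j\in J$), $\left(\bigvee_{i\in I}A_i\right)\blacktriangleright\left(\bigvee_{j\in J}B_j\right)=\bigvee_{i\in I,j\in J}(A_i\blacktriangleright B_j)$.
   Context: A sorted frame (polarity) is a triple $(X,\perp,Y)$ with $X,Y$ nonempty sets and ${\perp}\subseteq X\times Y$. For $U\subseteq X$ let $U'=\{y\in Y:\forall x\in U\ x\perp y\}$, and for $V\subseteq Y$ let ${}'V=\{x\in X:\forall y\in V\ x\perp y\}$. $A\subseteq X$ is stable if $A={}'(A')$; $B\subseteq Y$ is co-stable if $B=({}'B)'$. $\mathcal{G}(X)$, $\mathcal{G}(Y)$ are the complete lattices of stable, resp. co-stable, sets under inclusion (meets are intersections; the join of a family is the closure of its union, where the closure of $W\subseteq X$ is ${}'(W')$ and of $W\subseteq Y$ is $W''=({}'W)'$). Preorders: for $x,z\in X$, $x\le z$ iff $\{x\}'\subseteq\{z\}'$; for $y,v\in Y$, $y\le v$ iff ${}'\{y\}\subseteq{}'\{v\}$; the frame is separated if both are partial orders. $\Gamma u$ is the set of elements (of the same sort) above $u$. For $T\subseteq Y\times X\times Y$ (write $yTxv$), its Galois dual $T'\subseteq X\times X\times Y$ is given by $uT'xv$ iff $\forall y\in Y\,(yTxv\Rightarrow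 u\perp y)$. An implicative frame is $(X,\perp,Y,T)$ with $T\subseteq Y\times X\times Y$ such that: (F0) for all $x\in X,y\in Y$: $x\perp y$ iff $uT'xy$ for all $u\in X$; (F1) the frame is separated; (F2) for all $x\in X,v\in Y$ the set $\{y\in Y: yTxv\}$ equals $\Gamma w$ for some $w\in Y$; (F3) for each $y\in Y$, if $yTxv$, $x_1\le x$ and $v_1\le v$ then $yTx_1v_1$; (F4) for all $u,x\in X$ and $v\in Y$, the set $\{x_1\in X:uT'x_1v\}$ is stable and the set $\{v_1\in Y:uT'xv_1\}$ is co-stable. For $A\in\mathcal{G}(X)$, $B\in\mathcal{G}(Y)$ define $A\blacktriangleright B=\left(\{y\in Y:\exists x\in A\,\exists v\in B\ yTxv\}\right)''$. *)

theory Defs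
  imports Main
begin

text \<open>A sorted frame (X, perp, Y) with explicit carrier sets X, Y; the relation
  perp is given as a predicate R and the ternary relation T as a predicate
  (T y x v means y T x v).\<close>

definition rpol :: "'x set \<Rightarrow> 'y set \<Rightarrow> ('x \<Rightarrow> 'y \<Rightarrow> bool) \<Rightarrow> 'x set \<Rightarrow> 'y set" where
  "rpol X Y R U = {y \<in> Y. \<forall>x\<in>U. R x y}"

definition lpol :: "'x set \<Rightarrow> 'y set \<Rightarrow> ('x \<Rightarrow> 'y \<Rightarrow> bool) \<Rightarrow> 'y set \<Rightarrow> 'x set" where
  "lpol X Y R V = {x \<in> X. \<forall>y\<in>V. R x y}"

definition stable :: "'x set \<Rightarrow> 'y set \<Rightarrow> ('x \<Rightarrow> 'y \<Rightarrow> bool) \<Rightarrow> 'x set \<Rightarrow> bool" where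
  "stable X Y R A \<longleftrightarrow> A = lpol X Y R (rpol X Y R A)"

definition costable :: "'x set \<Rightarrow> 'y set \<Rightarrow> ('x \<Rightarrow> 'y \<Rightarrow> bool) \<Rightarrow> 'y set \<Rightarrow> bool" where
  "costable X Y R B \<longleftrightarrow> B = rpol X Y R (lpol X Y R B)"

definition joinX :: "'x set \<Rightarrow> 'y set \<Rightarrow> ('x \<Rightarrow> 'y \<Rightarrow> bool) \<Rightarrow> 'x set set \<Rightarrow> 'x set" where
  "joinX X Y R F = lpol X Y R (rpol X Y R (\<Union>F))"

definition joinY :: "'x set \<Rightarrow> 'y set \<Rightarrow> ('x \<Rightarrow> 'y \<Rightarrow> bool) \<Rightarrow> 'y set set \<Rightarrow> 'y set" where
  "joinY X Y R F = rpol X Y R (lpol X Y R (\<Union>F))"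

definition leX :: "'x set \<Rightarrow> 'y set \<Rightarrow> ('x \<Rightarrow> 'y \<Rightarrow> bool) \<Rightarrow> 'x \<Rightarrow> 'x \<Rightarrow> bool" where
  "leX X Y R x z \<longleftrightarrow> rpol X Y R {x} \<subseteq> rpol X Y R {z}"

definition leY :: "'x set \<Rightarrow> 'y set \<Rightarrow> ('x \<Rightarrow> 'y \<Rightarrow> bool) \<Rightarrow> 'y \<Rightarrow> 'y \<Rightarrow> bool" where
  "leY X Y R y v \<longleftrightarrow> lpol X Y R {y} \<subseteq> lpol X Y R {v}"

definition GammaY :: "'x set \<Rightarrow> 'y set \<Rightarrow> ('x \<Rightarrow> 'y \<Rightarrow> bool) \<Rightarrow> 'y \<Rightarrow> 'y set" where
  "GammaY X Y R w = {v \<in> Y. leY X Y R w v}"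

definition Tdual :: "'y set \<Rightarrow> ('x \<Rightarrow> 'y \<Rightarrow> bool) \<Rightarrow> ('y \<Rightarrow> 'x \<Rightarrow> 'y \<Rightarrow> bool) \<Rightarrow> 'x \<Rightarrow> 'x \<Rightarrow> 'y \<Rightarrow> bool" where
  "Tdual Y R T u x v \<longleftrightarrow> (\<forall>y\<in>Y. T y x v \<longrightarrow> R u y)"

definition implicative_frame ::
  "'x set \<Rightarrow> 'y set \<Rightarrow> ('x \<Rightarrow> 'y \<Rightarrow> bool) \<Rightarrow> ('y \<Rightarrow> 'x \<Rightarrow> 'y \<Rightarrow> bool) \<Rightarrow> bool" where
  "implicative_frame X Y R T \<longleftrightarrow>
     X \<noteq> {} \<and> Y \<noteq> {} \<and>
     (\<forall>x y. R x y \<longrightarrow> x \<in> X \<and> y \<in> Y) \<and>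
     (\<forall>y x v. T y x v \<longrightarrow> y \<in> Y \<and> x \<in> X \<and> v \<in> Y) \<and>
     \<comment> \<open>F0\<close>
     (\<forall>x\<in>X. \<forall>y\<in>Y. R x y \<longleftrightarrow> (\<forall>u\<in>X. Tdual Y R T u x y)) \<and>
     \<comment> \<open>F1\<close>
     (\<forall>x\<in>X. \<forall>z\<in>X. leX X Y R x z \<and> leX X Y R z x \<longrightarrow> x = z) \<and>
     (\<forall>y\<in>Y. \<forall>v\<in>Y. leY X Y R y v \<and> leY X Y R v y \<longrightarrow> y = v) \<and>
     \<comment> \<open>F2\<close>
     (\<forall>x\<in>X. \<forall>v\<in>Y. \<exists>w\<in>Y. {y \<in> Y. T y x v} = GammaY X Y R w) \<and>
     \<comment> \<open>F3\<close>
     (\<forall>y\<in>Y. \<forall>x\<in>X. \<forall>v\<in>Y. \<forall>x1\<in>X. \<forall>v1\<in>Y.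
        T y x v \<and> leX X Y R x1 x \<and> leY X Y R v1 v \<longrightarrow> T y x1 v1) \<and>
     \<comment> \<open>F4\<close>
     (\<forall>u\<in>X. \<forall>x\<in>X. \<forall>v\<in>Y.
        stable X Y R {x1 \<in> X. Tdual Y R T u x1 v} \<and>
        costable X Y R {v1 \<in> Y. Tdual Y R T u x v1})"

definition imp_op ::
  "'x set \<Rightarrow> 'y set \<Rightarrow> ('x \<Rightarrow> 'y \<Rightarrow> bool) \<Rightarrow> ('y \<Rightarrow> 'x \<Rightarrow> 'y \<Rightarrow> bool) \<Rightarrow> 'x set \<Rightarrow> 'y set \<Rightarrow> 'y set" where
  "imp_op X Y R T A B =
     rpol X Y R (lpol X Y R {y \<in> Y. \<exists>x\<in>A. \<exists>v\<in>B. T y x v})"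

end

theory Submission
  imports Defs
begin

lemma rpol_anti: "U \<subseteq> U2 \<Longrightarrow> rpol X Y R U2 \<subseteq> rpol X Y R U"
  unfolding rpol_def by blast
lemma lpol_anti: "U \<subseteq> U2 \<Longrightarrow> lpol X Y R U2 \<subseteq> lpol X Y R U"
  unfolding lpol_def by blast
lemma extX: "U \<subseteq> X \<Longrightarrow> U \<subseteq> lpol X Y R (rpol X Y R U)"
  unfolding lpol_def rpol_def by blast
lemma extY: "V \<subseteq> Y \<Longrightarrow> V \<subseteq> rpol X Y R (lpol X Y R V)"
  unfolding lpol_def rpol_def by blast
lemma lpol_sub: "lpol X Y R V \<subseteq> X" unfolding lpol_def by blast
lemma rpol_sub: "rpol X Y R V \<subseteq> Y" unfolding rpol_def by blast
lemma triple: "V \<subseteq> Y \<Longrightarrow> lpol X Y R (rpol X Y R (lpol X Y R V)) = lpol X Y R V"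
  by (rule equalityI[OF lpol_anti[OF extY] extX[OF lpol_sub]])
lemma tripleY: "W \<subseteq> X \<Longrightarrow> rpol X Y R (lpol X Y R (rpol X Y R W)) = rpol X Y R W"
  by (rule equalityI[OF rpol_anti[OF extX] extY[OF rpol_sub]])
lemma monoC: "V \<subseteq> V2 \<Longrightarrow> rpol X Y R (lpol X Y R V) \<subseteq> rpol X Y R (lpol X Y R V2)"
  by (intro rpol_anti lpol_anti)
lemma stable_cl: "stable X Y R P \<Longrightarrow> U \<subseteq> P \<Longrightarrow> lpol X Y R (rpol X Y R U) \<subseteq> P"
proof -
  assume a: "stable X Y R P" and b: "U \<subseteq> P"
  have "lpol X Y R (rpol X Y R U) \<subseteq> lpol X Y R (rpol X Y R P)" by (rule lpol_anti[OF rpol_anti[OF b]])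
  also have "\<dots> = P" using a unfolding stable_def by (rule sym)
  finally show ?thesis .
qed
lemma costable_cl: "costable X Y R P \<Longrightarrow> U \<subseteq> P \<Longrightarrow> rpol X Y R (lpol X Y R U) \<subseteq> P"
proof -
  assume a: "costable X Y R P" and b: "U \<subseteq> P"
  have "rpol X Y R (lpol X Y R U) \<subseteq> rpol X Y R (lpol X Y R P)" by (rule rpol_anti[OF lpol_anti[OF b]])
  also have "\<dots> = P" using a unfolding costable_def by (rule sym)
  finally show ?thesis .
qed
lemma stable_sub: "stable X Y R P \<Longrightarrow> P \<subseteq> X"
  unfolding stable_def using lpol_sub by (metis)
lemma costable_sub: "costable X Y R P \<Longrightarrow> P \<subseteq> Y"
  unfolding costable_def using rpol_sub by (metis)

lemma F4:
  assumes "implicative_frame X Y R T" "u \<in> X" "x \<in> X" "v \<in> Y"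
  shows "stable X Y R {x1 \<in> X. Tdual Y R T u x1 v}"
    "costable X Y R {v1 \<in> Y. Tdual Y R T u x v1}"
proof -
  have "\<forall>u\<in>X. \<forall>x\<in>X. \<forall>v\<in>Y.
        stable X Y R {x1 \<in> X. Tdual Y R T u x1 v} \<and>
        costable X Y R {v1 \<in> Y. Tdual Y R T u x v1}"
    using assms(1) unfolding implicative_frame_def by (elim conjE) assumption
  then show "stable X Y R {x1 \<in> X. Tdual Y R T u x1 v}"
    "costable X Y R {v1 \<in> Y. Tdual Y R T u x v1}" using assms(2-4) by auto
qed

lemma key:
  assumes F: "implicative_frame X Y R T" and AX: "A \<subseteq> X" and BY: "B \<subseteq> Y"
  shows "{y \<in> Y. \<exists>x\<in>lpol X Y R (rpol X Y R A). \<exists>v\<in>rpol X Y R (lpol X Y R B). T y x v}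
     \<subseteq> rpol X Y R (lpol X Y R {y \<in> Y. \<exists>x\<in>A. \<exists>v\<in>B. T y x v})"
proof
  fix y assume y: "y \<in> {y \<in> Y. \<exists>x\<in>lpol X Y R (rpol X Y R A). \<exists>v\<in>rpol X Y R (lpol X Y R B). T y x v}"
  then obtain x v where yY: "y \<in> Y" and x: "x \<in> lpol X Y R (rpol X Y R A)"
    and v: "v \<in> rpol X Y R (lpol X Y R B)" and T: "T y x v" by auto
  have "R u y" if u: "u \<in> lpol X Y R {y \<in> Y. \<exists>x\<in>A. \<exists>v\<in>B. T y x v}" for u
  proof -
    have uX: "u \<in> X" using u lpol_sub by (rule subsetD[rotated])
    have base: "Tdual Y R T u x1 v1" if "x1 \<in> A" "v1 \<in> B" for x1 v1
      unfolding Tdual_def proof (intro ballI impI)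
      fix y assume "y \<in> Y" "T y x1 v1"
      then have "y \<in> {y \<in> Y. \<exists>x\<in>A. \<exists>v\<in>B. T y x v}" using that by auto
      then show "R u y" using u unfolding lpol_def by auto
    qed
    have st: "stable X Y R {x1 \<in> X. Tdual Y R T u x1 v1}" if "v1 \<in> Y" for v1
      using F4(1)[OF F uX uX that] .
    have cst: "costable X Y R {v1 \<in> Y. Tdual Y R T u x1 v1}" if "x1 \<in> X" for x1
      using F4(2)[OF F uX that yY] .
    have s1: "Tdual Y R T u x1 v1" if "x1 \<in> lpol X Y R (rpol X Y R A)" "v1 \<in> B" for x1 v1
    proof -
      have "A \<subseteq> {x1 \<in> X. Tdual Y R T u x1 v1}" using AX base that(2) by auto
      then have "lpol X Y R (rpol X Y R A) \<subseteq> {x1 \<in> X. Tdual Y R T u x1 v1}"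
        using stable_cl[OF st] that(2) BY by auto
      then show ?thesis using that(1) by auto
    qed
    have xX: "x \<in> X" using x lpol_sub by (rule subsetD[rotated])
    have "B \<subseteq> {v1 \<in> Y. Tdual Y R T u x v1}" using BY s1 x by auto
    then have "rpol X Y R (lpol X Y R B) \<subseteq> {v1 \<in> Y. Tdual Y R T u x v1}"
      by (rule costable_cl[OF cst[OF xX]])
    then have "Tdual Y R T u x v" using v by auto
    then show ?thesis using T yY unfolding Tdual_def by auto
  qed
  then show "y \<in> rpol X Y R (lpol X Y R {y \<in> Y. \<exists>x\<in>A. \<exists>v\<in>B. T y x v})"
    using yY unfolding rpol_def by auto
qed



theorem lemma3p4:
  fixes X :: "'x set" and Y :: "'y set" and R :: "'x \<Rightarrow> 'y \<Rightarrow> bool"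
    and T :: "'y \<Rightarrow> 'x \<Rightarrow> 'y \<Rightarrow> bool"
    and A :: "'i \<Rightarrow> 'x set" and B :: "'j \<Rightarrow> 'y set"
    and I :: "'i set" and J :: "'j set"
  assumes "implicative_frame X Y R T"
    and "\<forall>i\<in>I. stable X Y R (A i)"
    and "\<forall>j\<in>J. costable X Y R (B j)"
  shows "imp_op X Y R T (joinX X Y R (A ` I)) (joinY X Y R (B ` J)) =
         joinY X Y R {imp_op X Y R T (A i) (B j) | i j. i \<in> I \<and> j \<in> J}"
proof -
  define A0 where "A0 = \<Union>(A ` I)"
  define B0 where "B0 = \<Union>(B ` J)"
  define S where "S = (\<lambda>P Q. {y \<in> Y. \<exists>x\<in>P. \<exists>v\<in>Q. T y x v})"
  define C where "C = (\<lambda>V. rpol X Y R (lpol X Y R V))"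
  define F where "F = {imp_op X Y R T (A i) (B j) | i j. i \<in> I \<and> j \<in> J}"
  have A0X: "A0 \<subseteq> X" unfolding A0_def using assms(2) stable_sub by blast
  have B0Y: "B0 \<subseteq> Y" unfolding B0_def using assms(3) costable_sub by blast
  have CC: "C (C V) = C V" for V unfolding C_def by (rule tripleY[OF lpol_sub])
  have Cm: "V \<subseteq> V2 \<Longrightarrow> C V \<subseteq> C V2" for V V2 unfolding C_def by (rule monoC)
  have SY: "S P Q \<subseteq> Y" for P Q unfolding S_def by auto
  have Cext: "V \<subseteq> Y \<Longrightarrow> V \<subseteq> C V" for V unfolding C_def by (rule extY)
  have Sm: "P \<subseteq> P2 \<Longrightarrow> Q \<subseteq> Q2 \<Longrightarrow> S P Q \<subseteq> S P2 Q2" for P P2 Q Q2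
    unfolding S_def by blast
  have L: "imp_op X Y R T (joinX X Y R (A ` I)) (joinY X Y R (B ` J))
     = C (S (lpol X Y R (rpol X Y R A0)) (rpol X Y R (lpol X Y R B0)))"
    unfolding imp_op_def joinX_def joinY_def A0_def B0_def S_def C_def ..
  have Rr: "joinY X Y R {imp_op X Y R T (A i) (B j) | i j. i \<in> I \<and> j \<in> J} = C (\<Union>F)"
    unfolding joinY_def F_def C_def ..
  have k: "S (lpol X Y R (rpol X Y R A0)) (rpol X Y R (lpol X Y R B0)) \<subseteq> C (S A0 B0)"
    unfolding S_def C_def by (rule key[OF assms(1) A0X B0Y])
  have e1: "C (S (lpol X Y R (rpol X Y R A0)) (rpol X Y R (lpol X Y R B0))) = C (S A0 B0)"
  proof (rule equalityI)
    show "C (S (lpol X Y R (rpol X Y R A0)) (rpol X Y R (lpol X Y R B0))) \<subseteq> C (S A0 B0)"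
      using Cm[OF k] CC by simp
    show "C (S A0 B0) \<subseteq> C (S (lpol X Y R (rpol X Y R A0)) (rpol X Y R (lpol X Y R B0)))"
      by (rule Cm[OF Sm[OF extX[OF A0X] extY[OF B0Y]]])
  qed
  have FC: "f \<in> F \<Longrightarrow> \<exists>i\<in>I. \<exists>j\<in>J. f = C (S (A i) (B j))" for f
    unfolding F_def C_def S_def imp_op_def by blast
  have e2: "C (\<Union>F) = C (S A0 B0)"
  proof (rule equalityI)
    have "\<Union>F \<subseteq> C (S A0 B0)"
    proof
      fix y assume "y \<in> \<Union>F"
      then obtain f where "f \<in> F" "y \<in> f" by blast
      then obtain i j where ij: "i \<in> I" "j \<in> J" "y \<in> C (S (A i) (B j))" using FC by blast
      have "S (A i) (B j) \<subseteq> S A0 B0" unfolding A0_def B0_def using ij by (intro Sm) auto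
      then show "y \<in> C (S A0 B0)" using Cm ij(3) by blast
    qed
    then show "C (\<Union>F) \<subseteq> C (S A0 B0)" using Cm CC by metis
    have "S A0 B0 \<subseteq> \<Union>F"
    proof
      fix y assume "y \<in> S A0 B0"
      then obtain i j x v where ij: "i \<in> I" "j \<in> J" "x \<in> A i" "v \<in> B j" "T y x v" "y \<in> Y"
        unfolding S_def A0_def B0_def by blast
      then have "y \<in> S (A i) (B j)" unfolding S_def by blast
      then have "y \<in> C (S (A i) (B j))" using Cext[OF SY] by blast
      moreover have "C (S (A i) (B j)) \<in> F" unfolding F_def C_def S_def imp_op_def using ij by blast
      ultimately show "y \<in> \<Union>F" by blast
    qed
    then show "C (S A0 B0) \<subseteq> C (\<Union>F)" by (rule Cm)
  qed
  show ?thesis unfolding L Rr e1 e2 ..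
qed

end
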